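(* For every integer $d \geq 2$, $\mathsf {Brac}_{d,1}=\mathsf {Brac}_d$.
   Context: $\Delta_d=\{\alpha\in\mathbb R^d:\alpha_i\ge0,\ \sum_i\alpha_i=1\}$. The bracelet condition set is $\mathsf{Brac}_d=\{(\alpha,\beta)\in\Delta_d^2:\ \forall i\in[d],\ \sqrt{\alpha_i\beta_i}\le\sum_{j\ne i}\sqrt{\alpha_j\beta_j}\}$. For $s\ge1$, the generalized bracelet condition set $\mathsf{Brac}_{d,s}$ is the set of $(\alpha,\beta)\in\Delta_d^2$ for which there exist $A_1,\dots,A_d,B_1,\dots,B_d\in M_s(\mathbb C)$ with $\sum_i A_iA_i^*=\sum_iB_iB_i^*=I_s$, $\sum_iA_iB_i^*=0$, and $\tfrac1s\|A_i\|_F^2=\alpha_i$, $\tfrac1s\|B_i\|_F^2=\beta_i$ for all $i\in[d]$, where $\|X\|_F=\operatorname{Tr}(XX^* )^{1/2}$. *)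

theory Defs
  imports Complex_Main
begin

text \<open>Vectors in R^d are real lists of length d (entry i is the (i+1)-th coordinate).
  Matrices in M_s(C) are functions nat \<Rightarrow> nat \<Rightarrow> complex, only entries with
  indices < s being relevant. A family A_1..A_d of matrices is a function
  nat \<Rightarrow> (nat \<Rightarrow> nat \<Rightarrow> complex), indexed by i < d.\<close>

definition simplex :: "nat \<Rightarrow> real list set" where
  "simplex d = {a. length a = d \<and> (\<forall>i<d. a ! i \<ge> 0) \<and> (\<Sum>i<d. a ! i) = 1}"

definition Brac :: "nat \<Rightarrow> (real list \<times> real list) set" where
  "Brac d = {(a, b). a \<in> simplex d \<and> b \<in> simplex d \<and>
     (\<forall>i<d. sqrt (a ! i * b ! i) \<le> (\<Sum>j\<in>{..<d} - {i}. sqrt (a ! j * b ! j)))}"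

text \<open>Entry (j,k) of \<Sum>_i X_i Y_i^* for s\<times>s matrices.\<close>
definition sum_mult_adj :: "nat \<Rightarrow> nat \<Rightarrow> (nat \<Rightarrow> nat \<Rightarrow> nat \<Rightarrow> complex)
    \<Rightarrow> (nat \<Rightarrow> nat \<Rightarrow> nat \<Rightarrow> complex) \<Rightarrow> nat \<Rightarrow> nat \<Rightarrow> complex" where
  "sum_mult_adj d s X Y j k = (\<Sum>i<d. \<Sum>l<s. X i j l * cnj (Y i k l))"

definition frob2 :: "nat \<Rightarrow> (nat \<Rightarrow> nat \<Rightarrow> complex) \<Rightarrow> real" where
  "frob2 s X = (\<Sum>j<s. \<Sum>k<s. (cmod (X j k))\<^sup>2)"

definition Brac_gen :: "nat \<Rightarrow> nat \<Rightarrow> (real list \<times> real list) set" where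
  "Brac_gen d s = {(a, b). a \<in> simplex d \<and> b \<in> simplex d \<and>
     (\<exists>A B :: nat \<Rightarrow> nat \<Rightarrow> nat \<Rightarrow> complex.
        (\<forall>j<s. \<forall>k<s. sum_mult_adj d s A A j k = (if j = k then 1 else 0)) \<and>
        (\<forall>j<s. \<forall>k<s. sum_mult_adj d s B B j k = (if j = k then 1 else 0)) \<and>
        (\<forall>j<s. \<forall>k<s. sum_mult_adj d s A B j k = 0) \<and>
        (\<forall>i<d. frob2 s (A i) / real s = a ! i \<and> frob2 s (B i) / real s = b ! i))}"

end

theory Submission
  imports Defs
begin

lemma split_lemma:
  fixes r :: "nat \<Rightarrow> real"
  assumes "finite Os" "\<forall>j\<in>Os. 0 \<le> r j \<and> r j \<le> R" "0 \<le> R"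
  shows "\<exists>T\<subseteq>Os. \<bar>sum r T - sum r (Os - T)\<bar> \<le> R"
  using assms
proof (induction Os rule: finite_induct)
  case empty
  then show ?case by auto
next
  case (insert x F)
  then obtain T where T: "T \<subseteq> F" "\<bar>sum r T - sum r (F - T)\<bar> \<le> R" by auto
  have rx: "0 \<le> r x" "r x \<le> R" using insert by auto
  have fT: "finite T" using T insert finite_subset by blast
  have xT: "x \<notin> T" using T insert by auto
  show ?case
  proof (cases "sum r T - sum r (F - T) \<ge> 0")
    case True
    have "insert x F - T = insert x (F - T)" using xT by auto
    hence "sum r (insert x F - T) = r x + sum r (F - T)" using insert by simp
    thus ?thesis using T True rx by (intro exI[of _ T]) auto
  next
    case False
    have "insert x F - insert x T = F - T" using insert by auto
    moreover have "sum r (insert x T) = r x + sum r T" using fT xT by simp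
    ultimately show ?thesis using T False rx
      by (intro exI[of _ "insert x T"]) auto
  qed
qed

lemma triangle_lemma:
  fixes a b c :: real
  assumes "0 \<le> a" "0 \<le> b" "0 \<le> c" "\<bar>b - c\<bar> \<le> a" "a \<le> b + c"
  shows "\<exists>w1 w2. cmod w1 = b \<and> cmod w2 = c \<and> complex_of_real a + w1 + w2 = 0"
proof (cases "a = 0")
  case True
  hence "b = c" using assms by auto
  then show ?thesis using True assms by (intro exI[of _ "of_real b"] exI[of _ "- of_real b"]) auto
next
  case False
  hence ap: "a > 0" using assms by auto
  define p where "p = (c^2 - b^2 - a^2) / (2*a)"
  have f1: "(a+b)^2 - c^2 \<ge> 0" using assms by (smt (verit) power_mono)
  have ab: "\<bar>a-b\<bar> \<le> c" using assms by linarith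
  have "\<bar>a-b\<bar>^2 \<le> c^2" by (rule power_mono[OF ab]) simp
  hence f2: "c^2 - (a-b)^2 \<ge> 0" by simp
  have "(2*a*b)^2 - (c^2 - b^2 - a^2)^2 = ((a+b)^2 - c^2) * (c^2 - (a-b)^2)"
    by (simp add: algebra_simps power2_eq_square)
  hence "(2*a*b)^2 - (c^2 - b^2 - a^2)^2 \<ge> 0" using f1 f2 by simp
  hence "(2*a*b)^2 - (2*a*p)^2 \<ge> 0" unfolding p_def using ap by simp
  hence "4*a^2 * (b^2 - p^2) \<ge> 0" by (simp add: algebra_simps power2_eq_square)
  hence qq: "b^2 - p^2 \<ge> 0" using ap
    by (metis mult_nonneg_nonneg zero_le_mult_iff zero_less_power zero_less_numeral
        mult_pos_pos not_le)
  define q where "q = sqrt (b^2 - p^2)"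
  have q2: "q^2 = b^2 - p^2" unfolding q_def using qq by simp
  define w1 where "w1 = Complex p q"
  define w2 where "w2 = Complex (-a-p) (-q)"
  have "(cmod w1)^2 = b^2" unfolding w1_def cmod_def using q2 by simp
  hence c1: "cmod w1 = b" using assms
    by (metis norm_ge_zero power2_eq_iff_nonneg)
  have "(-a-p)^2 + q^2 = c^2" using q2 ap unfolding p_def
    by (simp add: field_simps power2_eq_square)
  hence "(cmod w2)^2 = c^2" unfolding w2_def cmod_def by simp
  hence c2: "cmod w2 = c" using assms
    by (metis norm_ge_zero power2_eq_iff_nonneg)
  have "complex_of_real a + w1 + w2 = 0" unfolding w1_def w2_def
    by (simp add: complex_eq_iff)
  then show ?thesis using c1 c2 by blast
qed

lemma scale_lemma:
  fixes r :: "nat \<Rightarrow> real"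
  assumes "finite T" "\<forall>j\<in>T. 0 \<le> r j" "cmod w = sum r T"
  shows "(\<forall>j\<in>T. cmod (of_real (r j) * w / of_real (sum r T)) = r j) \<and>
         (\<Sum>j\<in>T. of_real (r j) * w / of_real (sum r T)) = w"
proof (cases "sum r T = 0")
  case True
  hence "\<forall>j\<in>T. r j = 0" using assms sum_nonneg_eq_0_iff by blast
  moreover have "w = 0" using True assms by simp
  ultimately show ?thesis by simp
next
  case False
  have "0 \<le> sum r T" by (rule sum_nonneg) (use assms in auto)
  hence pos: "sum r T > 0" using False by linarith
  have "\<forall>j\<in>T. cmod (of_real (r j) * w / of_real (sum r T)) = r j"
    using assms pos by (simp add: norm_mult norm_divide del: of_real_sum)
  moreover have "(\<Sum>j\<in>T. of_real (r j) * w / of_real (sum r T)) =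
      of_real (sum r T) * w / of_real (sum r T)"
    by (simp add: sum_divide_distrib[symmetric] sum_distrib_right[symmetric])
  ultimately show ?thesis using False by (simp del: of_real_sum)
qed

lemma polygon_lemma:
  fixes r :: "nat \<Rightarrow> real"
  assumes nn: "\<forall>i<d. 0 \<le> r i"
    and br: "\<forall>i<d. r i \<le> (\<Sum>j\<in>{..<d} - {i}. r j)"
  shows "\<exists>z. (\<forall>i<d. cmod (z i) = r i) \<and> (\<Sum>i<d. z i) = 0"
proof (cases "d = 0")
  case True then show ?thesis by auto
next
  case False
  define M where "M = Max (r ` {..<d})"
  have "M \<in> r ` {..<d}" unfolding M_def using False by (intro Max_in) auto
  then obtain m where m: "m < d" "r m = M" by auto
  have mx: "\<forall>i<d. r i \<le> r m" using m M_def by auto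
  define Os where "Os = {..<d} - {m}"
  have fO: "finite Os" unfolding Os_def by auto
  obtain T where T: "T \<subseteq> Os" "\<bar>sum r T - sum r (Os - T)\<bar> \<le> r m"
    using split_lemma[OF fO, of r "r m"] nn mx m unfolding Os_def by auto
  have fT: "finite T" using T fO finite_subset by blast
  have sO: "sum r Os = sum r T + sum r (Os - T)"
    using T fO by (metis sum.subset_diff add.commute)
  have nT: "0 \<le> sum r T" using T nn unfolding Os_def by (intro sum_nonneg) auto
  have nT2: "0 \<le> sum r (Os - T)" using nn unfolding Os_def by (intro sum_nonneg) auto
  obtain w1 w2 where w: "cmod w1 = sum r T" "cmod w2 = sum r (Os - T)"
      "complex_of_real (r m) + w1 + w2 = 0"
  proof -
    have "r m \<le> sum r Os" using br m unfolding Os_def by auto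
    hence "r m \<le> sum r T + sum r (Os - T)" using sO by simp
    moreover have "0 \<le> r m" using nn m by auto
    ultimately show ?thesis using triangle_lemma[of "r m" "sum r T" "sum r (Os - T)"] T nT nT2
      using that by blast
  qed
  define z where "z i = (if i = m then complex_of_real (r m) else if i \<in> T then
      of_real (r i) * w1 / of_real (sum r T) else
      of_real (r i) * w2 / of_real (sum r (Os - T)))" for i
  have s1: "(\<forall>j\<in>T. cmod (of_real (r j) * w1 / of_real (sum r T)) = r j) \<and>
         (\<Sum>j\<in>T. of_real (r j) * w1 / of_real (sum r T)) = w1"
    using scale_lemma[OF fT, of r w1] T nn w unfolding Os_def by auto
  have s2: "(\<forall>j\<in>Os-T. cmod (of_real (r j) * w2 / of_real (sum r (Os-T))) = r j) \<and>
         (\<Sum>j\<in>Os-T. of_real (r j) * w2 / of_real (sum r (Os-T))) = w2"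
    using scale_lemma[of "Os-T" r w2] fO nn w unfolding Os_def by auto
  have "\<forall>i<d. cmod (z i) = r i"
  proof (intro allI impI)
    fix i assume i: "i < d"
    show "cmod (z i) = r i"
    proof (cases "i = m")
      case True then show ?thesis using nn i unfolding z_def by auto
    next
      case False
      hence "i \<in> Os" using i unfolding Os_def by auto
      then show ?thesis using s1 s2 False unfolding z_def by auto
    qed
  qed
  moreover have "(\<Sum>i<d. z i) = 0"
  proof -
    have e: "{..<d} = insert m Os" using m unfolding Os_def by auto
    have "(\<Sum>i<d. z i) = z m + sum z Os" unfolding Os_def using m
      by (metis finite_lessThan lessThan_iff sum.remove)
    also have "sum z Os = sum z T + sum z (Os - T)"
      using T fO by (metis sum.subset_diff add.commute)
    also have "sum z T = w1"
    proof -
      have "sum z T = (\<Sum>j\<in>T. of_real (r j) * w1 / of_real (sum r T))"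
        using T unfolding z_def Os_def by (intro sum.cong) auto
      then show ?thesis using s1 by simp
    qed
    also have "sum z (Os - T) = w2"
    proof -
      have "sum z (Os - T) = (\<Sum>j\<in>Os-T. of_real (r j) * w2 / of_real (sum r (Os-T)))"
        unfolding z_def Os_def by (intro sum.cong) auto
      then show ?thesis using s2 by simp
    qed
    moreover have "z m = of_real (r m)" by (simp add: z_def)
    ultimately show ?thesis using w(3) by (simp add: add.assoc)
  qed
  ultimately show ?thesis by blast
qed

theorem proposition3p4:
  fixes d :: nat
  assumes "d \<ge> 2"
  shows "Brac_gen d 1 = Brac d"
proof
  show "Brac_gen d 1 \<subseteq> Brac d"
  proof
    fix p assume "p \<in> Brac_gen d 1"
    then obtain a b where p: "p = (a, b)" and sa: "a \<in> simplex d" and sb: "b \<in> simplex d"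
      and ex: "\<exists>A B :: nat \<Rightarrow> nat \<Rightarrow> nat \<Rightarrow> complex.
        (\<forall>j<1. \<forall>k<1. sum_mult_adj d 1 A A j k = (if j = k then 1 else 0)) \<and>
        (\<forall>j<1. \<forall>k<1. sum_mult_adj d 1 B B j k = (if j = k then 1 else 0)) \<and>
        (\<forall>j<1. \<forall>k<1. sum_mult_adj d 1 A B j k = 0) \<and>
        (\<forall>i<d. frob2 1 (A i) / real 1 = a ! i \<and> frob2 1 (B i) / real 1 = b ! i)"
      unfolding Brac_gen_def by auto
    then obtain A B :: "nat \<Rightarrow> nat \<Rightarrow> nat \<Rightarrow> complex" where
      AB: "sum_mult_adj d 1 A B 0 0 = 0"
        "\<forall>i<d. frob2 1 (A i) = a ! i \<and> frob2 1 (B i) = b ! i"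
      by auto
    define z where "z i = A i 0 0 * cnj (B i 0 0)" for i
    have z0: "(\<Sum>i<d. z i) = 0" using AB(1) unfolding z_def sum_mult_adj_def by simp
    have cz: "cmod (z i) = sqrt (a ! i * b ! i)" if "i < d" for i
    proof -
      have "a ! i = (cmod (A i 0 0))^2" "b ! i = (cmod (B i 0 0))^2"
        using AB(2) that unfolding frob2_def by auto
      then show ?thesis unfolding z_def
        by (simp add: norm_mult real_sqrt_mult)
    qed
    have "\<forall>i<d. sqrt (a ! i * b ! i) \<le> (\<Sum>j\<in>{..<d} - {i}. sqrt (a ! j * b ! j))"
    proof (intro allI impI)
      fix i assume i: "i < d"
      have "(\<Sum>j<d. z j) = z i + (\<Sum>j\<in>{..<d} - {i}. z j)"
        using i by (metis finite_lessThan lessThan_iff sum.remove)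
      hence "z i = - (\<Sum>j\<in>{..<d} - {i}. z j)" using z0 by (simp add: eq_neg_iff_add_eq_0)
      hence "cmod (z i) \<le> (\<Sum>j\<in>{..<d} - {i}. cmod (z j))"
        by (metis norm_minus_cancel norm_sum)
      also have "\<dots> = (\<Sum>j\<in>{..<d} - {i}. sqrt (a ! j * b ! j))"
        using cz by (intro sum.cong) auto
      finally show "sqrt (a ! i * b ! i) \<le> (\<Sum>j\<in>{..<d} - {i}. sqrt (a ! j * b ! j))"
        using cz i by simp
    qed
    then show "p \<in> Brac d" unfolding Brac_def using p sa sb by auto
  qed
next
  show "Brac d \<subseteq> Brac_gen d 1"
  proof
    fix p assume "p \<in> Brac d"
    then obtain a b where p: "p = (a, b)" and sa: "a \<in> simplex d" and sb: "b \<in> simplex d"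
      and br: "\<forall>i<d. sqrt (a ! i * b ! i) \<le> (\<Sum>j\<in>{..<d} - {i}. sqrt (a ! j * b ! j))"
      unfolding Brac_def by auto
    have an: "\<forall>i<d. 0 \<le> a ! i" "(\<Sum>i<d. a ! i) = 1" using sa unfolding simplex_def by auto
    have bn: "\<forall>i<d. 0 \<le> b ! i" "(\<Sum>i<d. b ! i) = 1" using sb unfolding simplex_def by auto
    define r where "r i = sqrt (a ! i * b ! i)" for i
    obtain z where z: "\<forall>i<d. cmod (z i) = r i" "(\<Sum>i<d. z i) = 0"
      using polygon_lemma[of d r] br an bn unfolding r_def by auto
    define u where "u i = (if r i = 0 then 1 else z i / of_real (r i))" for i
    have rnn: "0 \<le> r i" if "i < d" for i unfolding r_def using an bn that by simp
    have u1: "cmod (u i) = 1" if "i < d" for i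
      using z that rnn[OF that] unfolding u_def by (auto simp: norm_divide)
    have ruz: "of_real (r i) * u i = z i" if "i < d" for i
    proof (cases "r i = 0")
      case True then show ?thesis using z that unfolding u_def by auto
    next
      case False then show ?thesis unfolding u_def by simp
    qed
    define A :: "nat \<Rightarrow> nat \<Rightarrow> nat \<Rightarrow> complex" where
      "A i j k = of_real (sqrt (a ! i)) * u i" for i j k
    define B :: "nat \<Rightarrow> nat \<Rightarrow> nat \<Rightarrow> complex" where
      "B i j k = of_real (sqrt (b ! i))" for i j k
    have AA: "A i 0 0 * cnj (A i 0 0) = of_real (a ! i)" if "i < d" for i
    proof -
      have "A i 0 0 * cnj (A i 0 0) = of_real ((cmod (A i 0 0))^2)"
        by (rule complex_norm_square[symmetric])
      also have "cmod (A i 0 0) = sqrt (a ! i)" unfolding A_def using u1 that an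
        by (simp add: norm_mult)
      finally show ?thesis using an that by simp
    qed
    have BB: "B i 0 0 * cnj (B i 0 0) = of_real (b ! i)" if "i < d" for i
      unfolding B_def using bn that by (simp flip: of_real_mult)
    have AB: "A i 0 0 * cnj (B i 0 0) = z i" if "i < d" for i
    proof -
      have "A i 0 0 * cnj (B i 0 0) = of_real (sqrt (a ! i) * sqrt (b ! i)) * u i"
        unfolding A_def B_def by simp
      also have "sqrt (a ! i) * sqrt (b ! i) = r i" unfolding r_def by (simp add: real_sqrt_mult)
      finally show ?thesis using ruz that by simp
    qed
    have e1: "sum_mult_adj d 1 A A 0 0 = 1"
    proof -
      have "sum_mult_adj d 1 A A 0 0 = (\<Sum>i<d. of_real (a ! i))"
        unfolding sum_mult_adj_def using AA by (intro sum.cong) auto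
      also have "\<dots> = of_real (\<Sum>i<d. a ! i)" by simp
      finally show ?thesis using an by simp
    qed
    have e2: "sum_mult_adj d 1 B B 0 0 = 1"
    proof -
      have "sum_mult_adj d 1 B B 0 0 = (\<Sum>i<d. of_real (b ! i))"
        unfolding sum_mult_adj_def using BB by (intro sum.cong) auto
      also have "\<dots> = of_real (\<Sum>i<d. b ! i)" by simp
      finally show ?thesis using bn by simp
    qed
    have e3: "sum_mult_adj d 1 A B 0 0 = 0"
    proof -
      have "sum_mult_adj d 1 A B 0 0 = (\<Sum>i<d. z i)"
        unfolding sum_mult_adj_def using AB by (intro sum.cong) auto
      then show ?thesis using z by simp
    qed
    have fr: "\<forall>i<d. frob2 1 (A i) / real 1 = a ! i \<and> frob2 1 (B i) / real 1 = b ! i"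
    proof (intro allI impI)
      fix i assume i: "i < d"
      have "cmod (A i 0 0) = sqrt (a ! i)" unfolding A_def using u1 i an
        by (simp add: norm_mult)
      moreover have "cmod (B i 0 0) = sqrt (b ! i)" unfolding B_def using i bn by simp
      ultimately show "frob2 1 (A i) / real 1 = a ! i \<and> frob2 1 (B i) / real 1 = b ! i"
        unfolding frob2_def using i an bn by simp
    qed
    have ex: "\<exists>A B :: nat \<Rightarrow> nat \<Rightarrow> nat \<Rightarrow> complex.
        (\<forall>j<1. \<forall>k<1. sum_mult_adj d 1 A A j k = (if j = k then 1 else 0)) \<and>
        (\<forall>j<1. \<forall>k<1. sum_mult_adj d 1 B B j k = (if j = k then 1 else 0)) \<and>
        (\<forall>j<1. \<forall>k<1. sum_mult_adj d 1 A B j k = 0) \<and>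
        (\<forall>i<d. frob2 1 (A i) / real 1 = a ! i \<and> frob2 1 (B i) / real 1 = b ! i)"
      apply (rule exI[of _ A], rule exI[of _ B])
      using e1 e2 e3 fr by (simp only: less_one) simp
    show "p \<in> Brac_gen d 1" unfolding Brac_gen_def using p sa sb ex by simp
  qed
qed

end
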